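(* Fix a CW structure on $\mathbb{R}$ and an open subspace $P\subset\mathbb{R}^n\times\mathbb{R}$, regarded as a space over $\mathbb{R}$ via the projection $\tau_P$ onto the last coordinate. Then the natural function $$\Gamma_P(\mathbb{R})\longrightarrow\lim_c\pi_0\Gamma_P(c),$$ where $c$ ranges over the closed cells of $\mathbb{R}$ (ordered by reverse inclusion, with restriction maps), is surjective.
   Context: For a subset $A\subset\mathbb{R}$, $\Gamma_P(A)$ is the space (compact-open topology) of sections of $\tau_P$ over $A$, i.e. continuous maps $s\colon A\to P$ with $\tau_P\circ s=\mathrm{id}_A$; $\pi_0$ denotes the set of path components. The map sends a global section to the family of path components of its restrictions to the closed cells. *)

theory Defs
  imports "HOL-Analysis.Analysis"
begin

text \<open>A CW structure on the real line, described by its set V of 0-cells: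
  V is closed and discrete (equivalently, meets every compact interval in a finite set)
  and unbounded above and below (the open 1-cells, i.e. the components of the complement
  of V, must be bounded since closed cells are compact).\<close>
definition CW_structure_R :: "real set \<Rightarrow> bool" where
  "CW_structure_R V \<longleftrightarrow>
     (\<forall>a b. finite (V \<inter> {a..b})) \<and> (\<forall>x. \<exists>v\<in>V. x < v) \<and> (\<forall>x. \<exists>v\<in>V. v < x)"

definition closed_cells :: "real set \<Rightarrow> real set set" where
  "closed_cells V =
     {{v} | v. v \<in> V} \<union> {{a..b} | a b. a \<in> V \<and> b \<in> V \<and> a < b \<and> {a<..<b} \<inter> V = {}}"

definition sections :: "('a::topological_space \<times> real) set \<Rightarrow> real set \<Rightarrow> (real \<Rightarrow> 'a \<times> real) set" where
  "sections P A = {s. continuous_on A s \<and> s ` A \<subseteq> P \<and> (\<forall>t\<in>A. snd (s t) = t) \<and> s \<in> extensional A}"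

definition compact_open :: "real set \<Rightarrow> (real \<Rightarrow> 'b::topological_space) set \<Rightarrow> (real \<Rightarrow> 'b) topology" where
  "compact_open A F =
     topology_generated_by {{f \<in> F. f ` K \<subseteq> U} | K U. K \<subseteq> A \<and> compact K \<and> open U}"

definition Gamma :: "('a::topological_space \<times> real) set \<Rightarrow> real set \<Rightarrow> (real \<Rightarrow> 'a \<times> real) topology" where
  "Gamma P A = compact_open A (sections P A)"

end

theory Submission
  imports Defs
begin

lemma sec_in_basis: "sections P A \<in> {{f \<in> sections P A. f ` K \<subseteq> U} |K U. K \<subseteq> A \<and> compact K \<and> open U}"
proof -
  have "sections P A = {f \<in> sections P A. f ` {} \<subseteq> UNIV}" by simp
  then show ?thesis by blast
qed

lemma topspace_Gamma: "topspace (Gamma P A) = sections P A"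
  unfolding Gamma_def compact_open_def topology_generated_by_topspace
  using sec_in_basis[of P A] by blast

lemma basis_mem:
  assumes "K \<subseteq> A" "compact K" "open U"
  shows "{f \<in> sections P A. f ` K \<subseteq> U} \<in> {{f \<in> sections P A. f ` K \<subseteq> U} | K U. K \<subseteq> A \<and> compact K \<and> open U}"
  by (rule CollectI, rule exI[of _ K], rule exI[of _ U]) (use assms in simp)

lemma eval_cont:
  fixes P :: "('a::topological_space \<times> real) set"
  assumes "t \<in> A"
  shows "continuous_map (Gamma P A) euclidean (\<lambda>f. f t)"
  unfolding continuous_map_def
proof (intro conjI allI impI)
  show "(\<lambda>f. f t) \<in> topspace (Gamma P A) \<rightarrow> topspace euclidean" by simp
  fix U :: "('a \<times> real) set" assume "openin euclidean U"
  hence "open U" by simp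
  have eq: "{f \<in> topspace (Gamma P A). f t \<in> U} = {f \<in> sections P A. f ` {t} \<subseteq> U}"
    by (simp add: topspace_Gamma)
  have "{f \<in> sections P A. f ` {t} \<subseteq> U} \<in> {{f \<in> sections P A. f ` K \<subseteq> U} | K U. K \<subseteq> A \<and> compact K \<and> open U}"
    using assms \<open>open U\<close> by (intro basis_mem) auto
  then have "openin (Gamma P A) {f \<in> sections P A. f ` {t} \<subseteq> U}"
    unfolding Gamma_def compact_open_def openin_topology_generated_by_iff
    by (rule generate_topology_on.Basis)
  then show "openin (Gamma P A) {f \<in> topspace (Gamma P A). f t \<in> U}"
    unfolding eq .
qed

lemma hom_cont:
  fixes H :: "real \<times> real \<Rightarrow> 'a::topological_space \<times> real"
  assumes H: "continuous_on ({0..1} \<times> A) H"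
    and sec: "\<And>l. l \<in> {0..1} \<Longrightarrow> restrict (\<lambda>t. H (l,t)) A \<in> sections P A"
  shows "pathin (Gamma P A) (\<lambda>l. restrict (\<lambda>t. H (l,t)) A)"
  unfolding pathin_def Gamma_def compact_open_def
proof (rule continuous_on_generated_topo)
  show "(\<lambda>l. restrict (\<lambda>t. H (l, t)) A) ` topspace (top_of_set {0..1})
    \<subseteq> \<Union> {{f \<in> sections P A. f ` K \<subseteq> U} |K U. K \<subseteq> A \<and> compact K \<and> open U}"
  proof
    fix g assume "g \<in> (\<lambda>l. restrict (\<lambda>t. H (l, t)) A) ` topspace (top_of_set {0..1})"
    then have "g \<in> sections P A" using sec by auto
    then show "g \<in> \<Union> {{f \<in> sections P A. f ` K \<subseteq> U} |K U. K \<subseteq> A \<and> compact K \<and> open U}"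
      using sec_in_basis[of P A] by blast
  qed
  fix W assume "W \<in> {{f \<in> sections P A. f ` K \<subseteq> U} |K U. K \<subseteq> A \<and> compact K \<and> open U}"
  then obtain K U where W: "W = {f \<in> sections P A. f ` K \<subseteq> U}" and K: "K \<subseteq> A" "compact K" and U: "open U"
    by blast
  define S where "S = ({0..1} \<times> K) \<inter> H -` (- U)"
  have "continuous_on ({0..1} \<times> K) H"
    using H by (rule continuous_on_subset) (use K(1) in auto)
  moreover have "compact ({0..1::real} \<times> K)" using K(2) by (intro compact_Times) auto
  ultimately have "compact S" unfolding S_def
    using U by (meson closedin_compact continuous_closedin_preimage closed_Compl)
  then have cl: "closed (fst ` S)" by (intro compact_imp_closed compact_continuous_image continuous_intros)
  have eq: "(\<lambda>l. restrict (\<lambda>t. H (l, t)) A) -` W \<inter> topspace (top_of_set {0..1}) = {0..1} \<inter> - (fst ` S)"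
  proof (rule set_eqI, rule iffI)
    fix l assume l: "l \<in> (\<lambda>l. restrict (\<lambda>t. H (l, t)) A) -` W \<inter> topspace (top_of_set {0..1})"
    then have "l \<in> {0..1}" by simp
    moreover have "\<forall>k\<in>K. H (l,k) \<in> U" using l K(1) unfolding W by auto
    ultimately show "l \<in> {0..1} \<inter> - (fst ` S)" unfolding S_def by auto
  next
    fix l assume l: "l \<in> {0..1} \<inter> - (fst ` S)"
    have "\<forall>k\<in>K. H (l,k) \<in> U"
    proof (rule ballI, rule ccontr)
      fix k assume "k \<in> K" "H (l,k) \<notin> U"
      then have "(l,k) \<in> S" using l unfolding S_def by auto
      then have "l \<in> fst ` S" by (metis fst_conv image_eqI)
      then show False using l by auto
    qed
    then show "l \<in> (\<lambda>l. restrict (\<lambda>t. H (l, t)) A) -` W \<inter> topspace (top_of_set {0..1})"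
      using l sec K(1) unfolding W by auto
  qed
  show "openin (top_of_set {0..1}) ((\<lambda>l. restrict (\<lambda>t. H (l, t)) A) -` W \<inter> topspace (top_of_set {0..1}))"
    unfolding eq using cl by (intro openin_open_Int) auto
qed


lemma cell_mod:
  fixes P :: "('a::real_normed_vector \<times> real) set" and f :: "real \<Rightarrow> 'a \<times> real" and \<gamma> :: "real \<Rightarrow> 'a"
  assumes P: "open P" and ab: "a < b" and f: "f \<in> sections P {a..b}"
    and \<gamma>c: "continuous_on {0..1} \<gamma>" and \<gamma>0: "\<gamma> 0 = fst (f a)" and \<gamma>P: "\<forall>u\<in>{0..1}. (\<gamma> u, a) \<in> P"
  shows "\<exists>f'. path_component_of (Gamma P {a..b}) f f' \<and> f' a = (\<gamma> 1, a) \<and> f' b = f b"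
proof -
  have fc: "continuous_on {a..b} f" and fP: "\<forall>t\<in>{a..b}. f t \<in> P"
    and fs: "\<forall>t\<in>{a..b}. snd (f t) = t" and fe: "f \<in> extensional {a..b}"
    using f unfolding sections_def by auto
  define K where "K = (\<lambda>u. (\<gamma> u, a)) ` {0..1}"
  have "compact K" unfolding K_def by (intro compact_continuous_image continuous_intros \<gamma>c) auto
  have "K \<subseteq> P" using \<gamma>P K_def by auto
  obtain e where e: "e>0" "(\<Union>z\<in>K. ball z e) \<subseteq> P"
    using compact_subset_open_imp_ball_epsilon_subset[OF \<open>compact K\<close> P \<open>K\<subseteq>P\<close>] by blast
  have "a \<in> {a..b}" using ab by simp
  obtain d where d: "d>0" "\<forall>t\<in>{a..b}. dist t a < d \<longrightarrow> dist (f t) (f a) < e/2"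
    using fc \<open>a\<in>{a..b}\<close> \<open>e>0\<close> unfolding continuous_on_iff by (meson half_gt_zero)
  define \<delta> where "\<delta> = min (min d (e/2)) (b-a) / 2"
  have \<delta>: "\<delta> > 0" "\<delta> < d" "\<delta> < e/2" "a + \<delta> < b" using d(1) e(1) ab unfolding \<delta>_def by (auto simp: min_def field_simps)
  define \<rho> where "\<rho> t = max 0 (1 - (t-a)/\<delta>)" for t
  define H where "H p = (fst (f (snd p)) + (\<gamma> (fst p * \<rho> (snd p)) - \<gamma> 0), snd p)" for p :: "real \<times> real"
  have \<rho>01: "\<rho> t \<in> {0..1}" if "t \<ge> a" for t
    using that \<delta> by (auto simp: \<rho>_def)
  have \<rho>0: "\<rho> t = 0" if "t \<ge> a+\<delta>" for t
  proof -
    have "(t-a)/\<delta> \<ge> 1" using that \<delta> by (simp add: le_divide_eq_1)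
    then show ?thesis by (simp add: \<rho>_def)
  qed
  have \<rho>a: "\<rho> a = 1" by (simp add: \<rho>_def)
  have \<rho>c: "continuous_on UNIV \<rho>" unfolding \<rho>_def using \<delta> by (intro continuous_intros) auto
  have c1: "continuous_on ({0..1} \<times> {a..b}) (\<lambda>p. f (snd p))"
    by (rule continuous_on_compose2[OF fc]) (auto intro: continuous_intros)
  have c3: "continuous_on ({0..1} \<times> {a..b}) (\<lambda>p. fst p * \<rho> (snd p))"
    by (intro continuous_intros continuous_on_compose2[OF \<rho>c]) auto
  have c2: "continuous_on ({0..1} \<times> {a..b}) (\<lambda>p. \<gamma> (fst p * \<rho> (snd p)))"
  proof (rule continuous_on_compose2[OF \<gamma>c c3])
    show "(\<lambda>p. fst p * \<rho> (snd p)) ` ({0..1} \<times> {a..b}) \<subseteq> {0..1}"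
    proof
      fix y assume "y \<in> (\<lambda>p. fst p * \<rho> (snd p)) ` ({0..1} \<times> {a..b})"
      then obtain l t where lt: "l \<in> {0..1}" "t \<in> {a..b}" "y = l * \<rho> t" by auto
      then have "\<rho> t \<in> {0..1}" using \<rho>01 by auto
      then show "y \<in> {0..1}" using lt by (auto intro: mult_le_one)
    qed
  qed
  have Hc: "continuous_on ({0..1} \<times> {a..b}) H"
    unfolding H_def by (intro continuous_intros c1 c2)
  have HP: "H (l,t) \<in> P" if l: "l\<in>{0..1}" and t: "t\<in>{a..b}" for l t
  proof (cases "t \<ge> a+\<delta>")
    case True
    then have "H (l,t) = f t" using \<rho>0 fs t by (simp add: H_def prod_eq_iff)
    then show ?thesis using fP t by simp
  next
    case False
    then have "dist t a < d" using t \<delta> by (auto simp: dist_real_def)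
    then have fd: "dist (f t) (f a) < e/2" using d t by auto
    define u where "u = l * \<rho> t"
    have "u \<in> {0..1}" using \<rho>01[of t] t l unfolding u_def by (auto intro: mult_le_one)
    then have z: "(\<gamma> u, a) \<in> K" unfolding K_def by auto
    have "norm (fst (f t) - fst (f a)) \<le> norm (f t - f a)"
      by (metis fst_diff norm_fst_le prod.collapse)
    also have "\<dots> < e/2" using fd by (simp add: dist_norm)
    finally have n1: "norm (fst (f t) - fst (f a)) < e/2" .
    have "dist (\<gamma> u, a) (H (l,t)) = norm ((\<gamma> u, a) - H (l,t))" by (simp add: dist_norm)
    also have "(\<gamma> u, a) - H (l,t) = (fst (f a) - fst (f t), a - t)"
      unfolding H_def u_def using \<gamma>0 by simp
    also have "norm \<dots> \<le> norm (fst (f a) - fst (f t)) + norm (a - t)" by (rule norm_Pair_le)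
    also have "\<dots> < e/2 + e/2" using n1 False t \<delta> by (simp add: norm_minus_commute)
    finally have "H (l,t) \<in> ball (\<gamma> u, a) e" by simp
    then show ?thesis using z e by blast
  qed
  have sec: "restrict (\<lambda>t. H(l,t)) {a..b} \<in> sections P {a..b}" if l: "l\<in>{0..1}" for l
  proof -
    have "continuous_on {a..b} (\<lambda>t. H(l,t))"
      by (rule continuous_on_compose2[OF Hc]) (use l in \<open>auto intro: continuous_intros\<close>)
    then have "continuous_on {a..b} (restrict (\<lambda>t. H(l,t)) {a..b})"
      by (rule continuous_on_cong[THEN iffD1, rotated 2]) auto
    then show ?thesis unfolding sections_def using HP[OF l] by (auto simp: H_def)
  qed
  define g where "g l = restrict (\<lambda>t. H(l,t)) {a..b}" for l
  have "pathin (Gamma P {a..b}) g" unfolding g_def by (rule hom_cont[OF Hc sec])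
  moreover have "g 0 = f"
  proof
    fix t show "g 0 t = f t"
    proof (cases "t \<in> {a..b}")
      case True then show ?thesis using fs by (simp add: g_def H_def prod_eq_iff)
    next
      case False then show ?thesis using fe False unfolding g_def extensional_def by auto
    qed
  qed
  moreover have "g 1 a = (\<gamma> 1, a)" using ab \<gamma>0 by (simp add: g_def H_def \<rho>a)
  moreover have "g 1 b = f b" using ab \<rho>0[of b] \<delta> fs by (simp add: g_def H_def prod_eq_iff)
  ultimately show ?thesis unfolding path_component_of_def by blast
qed


lemma pc_mem:
  assumes "C \<in> path_components_of X" "f \<in> C" "path_component_of X f g"
  shows "g \<in> C"
proof -
  obtain a where C: "C = Collect (path_component_of X a)"
    using assms(1) unfolding path_components_of_def by blast
  then have "path_component_of X a f" using assms(2) by simp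
  then have "path_component_of X a g" using assms(3) by (rule path_component_of_trans)
  then show ?thesis using C by simp
qed

lemma pc_mem2:
  assumes "C \<in> path_components_of X" "f \<in> C" "g \<in> C"
  shows "path_component_of X f g"
proof -
  obtain a where C: "C = Collect (path_component_of X a)"
    using assms(1) unfolding path_components_of_def by blast
  then have "path_component_of X a f" "path_component_of X a g" using assms(2,3) by auto
  then show ?thesis by (meson path_component_of_sym path_component_of_trans)
qed

lemma CW_lo:
  assumes "CW_structure_R V"
  shows "\<exists>m\<in>V. m \<le> t \<and> (\<forall>v\<in>V. v \<le> t \<longrightarrow> v \<le> m)"
proof -
  obtain w where w: "w \<in> V" "w < t" using assms unfolding CW_structure_R_def by blast
  define F where "F = V \<inter> {w..t}"
  have fin: "finite F" using assms unfolding CW_structure_R_def F_def by blast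
  have "w \<in> F" using w unfolding F_def by auto
  then have ne: "F \<noteq> {}" by auto
  have "Max F \<in> F" using fin ne by (rule Max_in)
  moreover have "\<forall>v\<in>V. v \<le> t \<longrightarrow> v \<le> Max F"
  proof (intro ballI impI)
    fix v assume "v \<in> V" "v \<le> t"
    show "v \<le> Max F"
    proof (cases "w \<le> v")
      case True then have "v \<in> F" using \<open>v\<in>V\<close> \<open>v\<le>t\<close> unfolding F_def by auto
      then show ?thesis using fin by simp
    next
      case False then show ?thesis using Max_ge[OF fin \<open>w\<in>F\<close>] by simp
    qed
  qed
  ultimately show ?thesis unfolding F_def by auto
qed

lemma CW_pr:
  assumes "CW_structure_R V"
  shows "\<exists>m\<in>V. m < t \<and> (\<forall>v\<in>V. v < t \<longrightarrow> v \<le> m)"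
proof -
  obtain w where w: "w \<in> V" "w < t" using assms unfolding CW_structure_R_def by blast
  define F where "F = V \<inter> {w..<t}"
  have "finite (V \<inter> {w..t})" using assms unfolding CW_structure_R_def by blast
  then have fin: "finite F" unfolding F_def by (rule finite_subset[rotated]) auto
  have "w \<in> F" using w unfolding F_def by auto
  then have ne: "F \<noteq> {}" by auto
  have "Max F \<in> F" using fin ne by (rule Max_in)
  moreover have "\<forall>v\<in>V. v < t \<longrightarrow> v \<le> Max F"
  proof (intro ballI impI)
    fix v assume "v \<in> V" "v < t"
    show "v \<le> Max F"
    proof (cases "w \<le> v")
      case True then have "v \<in> F" using \<open>v\<in>V\<close> \<open>v<t\<close> unfolding F_def by auto
      then show ?thesis using fin by simp
    next
      case False then show ?thesis using Max_ge[OF fin \<open>w\<in>F\<close>] by simp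
    qed
  qed
  ultimately show ?thesis unfolding F_def by auto
qed

lemma CW_hi:
  assumes "CW_structure_R V"
  shows "\<exists>m\<in>V. t < m \<and> (\<forall>v\<in>V. t < v \<longrightarrow> m \<le> v)"
proof -
  obtain w where w: "w \<in> V" "t < w" using assms unfolding CW_structure_R_def by blast
  define F where "F = V \<inter> {t<..w}"
  have "finite (V \<inter> {t..w})" using assms unfolding CW_structure_R_def by blast
  then have fin: "finite F" unfolding F_def by (rule finite_subset[rotated]) auto
  have "w \<in> F" using w unfolding F_def by auto
  then have ne: "F \<noteq> {}" by auto
  have "Min F \<in> F" using fin ne by (rule Min_in)
  moreover have "\<forall>v\<in>V. t < v \<longrightarrow> Min F \<le> v"
  proof (intro ballI impI)
    fix v assume "v \<in> V" "t < v"
    show "Min F \<le> v"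
    proof (cases "v \<le> w")
      case True then have "v \<in> F" using \<open>v\<in>V\<close> \<open>t<v\<close> unfolding F_def by auto
      then show ?thesis using fin by simp
    next
      case False then show ?thesis using Min_le[OF fin \<open>w\<in>F\<close>] by simp
    qed
  qed
  ultimately show ?thesis unfolding F_def by auto
qed

theorem lemmaA1:
  fixes V :: "real set" and P :: "((real^'n) \<times> real) set"
    and x :: "real set \<Rightarrow> (real \<Rightarrow> (real^'n) \<times> real) set"
  assumes "CW_structure_R V"
    and "open P"
    and "\<forall>c\<in>closed_cells V. x c \<in> path_components_of (Gamma P c)"
    and "\<forall>c\<in>closed_cells V. \<forall>d\<in>closed_cells V. c \<subseteq> d \<longrightarrow> (\<forall>s\<in>x d. restrict s c \<in> x c)"
  shows "\<exists>s\<in>sections P UNIV. \<forall>c\<in>closed_cells V. restrict s c \<in> x c"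
proof -
  note CW = assms(1) and P = assms(2) and xpc = assms(3) and xres = assms(4)
  define consec where "consec a b \<longleftrightarrow> a\<in>V \<and> b\<in>V \<and> a<b \<and> {a<..<b}\<inter>V={}" for a b
  define lo where "lo t = (SOME m. m\<in>V \<and> m \<le> t \<and> (\<forall>v\<in>V. v \<le> t \<longrightarrow> v \<le> m))" for t
  define pr where "pr t = (SOME m. m\<in>V \<and> m < t \<and> (\<forall>v\<in>V. v < t \<longrightarrow> v \<le> m))" for t
  define hi where "hi t = (SOME m. m\<in>V \<and> t < m \<and> (\<forall>v\<in>V. t < v \<longrightarrow> m \<le> v))" for t
  have lo: "lo t \<in> V \<and> lo t \<le> t \<and> (\<forall>v\<in>V. v \<le> t \<longrightarrow> v \<le> lo t)" for t
    unfolding lo_def using CW_lo[OF CW, of t] by (rule someI2_bex) auto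
  have pr: "pr t \<in> V \<and> pr t < t \<and> (\<forall>v\<in>V. v < t \<longrightarrow> v \<le> pr t)" for t
    unfolding pr_def using CW_pr[OF CW, of t] by (rule someI2_bex) auto
  have hi: "hi t \<in> V \<and> t < hi t \<and> (\<forall>v\<in>V. t < v \<longrightarrow> hi t \<le> v)" for t
    unfolding hi_def using CW_hi[OF CW, of t] by (rule someI2_bex) auto
  have F1: "consec (lo t) (hi t)" for t
  proof -
    have "{lo t<..<hi t} \<inter> V = {}"
    proof (rule ccontr)
      assume "{lo t<..<hi t} \<inter> V \<noteq> {}"
      then obtain v where v: "v \<in> V" "lo t < v" "v < hi t" by auto
      show False
      proof (cases "v \<le> t")
        case True then show False using lo[of t] v by force
      next
        case False then show False using hi[of t] v by force
      qed
    qed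
    then show ?thesis unfolding consec_def using lo[of t] hi[of t] by auto
  qed
  have F2: "consec (pr b) b" if "b \<in> V" for b
  proof -
    have "{pr b<..<b} \<inter> V = {}" using pr[of b] by force
    then show ?thesis unfolding consec_def using pr[of b] that by auto
  qed
  have F3: "lo t = a \<and> hi t = b" if "consec a b" "a \<le> t" "t < b" for a b t
  proof -
    have "lo t = a"
    proof -
      have "a \<le> lo t" using lo[of t] that unfolding consec_def by auto
      moreover have "lo t < b" using lo[of t] that by auto
      ultimately show ?thesis using lo[of t] that unfolding consec_def by force
    qed
    moreover have "hi t = b"
    proof -
      have "hi t \<le> b" using hi[of t] that unfolding consec_def by auto
      moreover have "a < hi t" using hi[of t] that by auto
      ultimately show ?thesis using hi[of t] that unfolding consec_def by force
    qed
    ultimately show ?thesis ..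
  qed
  have F4: "pr b = a" if "consec a b" for a b
  proof -
    have "a \<le> pr b" using pr[of b] that unfolding consec_def by auto
    then show ?thesis using pr[of b] that unfolding consec_def by force
  qed
  have lov: "lo v = v" if "v \<in> V" for v using lo[of v] that by force
  have cell1: "{a..b} \<in> closed_cells V" if "consec a b" for a b
    using that unfolding consec_def closed_cells_def by blast
  have cell0: "{v} \<in> closed_cells V" if "v \<in> V" for v
    using that unfolding closed_cells_def by blast
  have xsec: "x c \<subseteq> sections P c" if "c \<in> closed_cells V" for c
    using path_components_of_subset[OF xpc[rule_format, OF that]] by (simp add: topspace_Gamma)
  define sel where "sel a b = (SOME f. f \<in> x {a..b})" for a b
  have sel: "sel a b \<in> x {a..b}" if "consec a b" for a b
  proof -
    have "x {a..b} \<noteq> {}" using nonempty_path_components_of xpc cell1[OF that] by blast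
    then obtain f where "f \<in> x {a..b}" by blast
    then show ?thesis unfolding sel_def by (rule someI[of "\<lambda>f. f \<in> x {a..b}"])
  qed
  define q where "q a = sel (pr a) a a" for a
  define M where "M a b = (SOME f. f \<in> x {a..b} \<and> f a = q a \<and> f b = sel a b b)" for a b
  have Mex: "\<exists>f. f \<in> x {a..b} \<and> f a = q a \<and> f b = sel a b b" if ab: "consec a b" for a b
  proof -
    have aV: "a \<in> V" and ab': "a < b" using ab unfolding consec_def by auto
    define f0 where "f0 = sel a b"
    define f1 where "f1 = sel (pr a) a"
    have cpa: "consec (pr a) a" using F2[OF aV] .
    have f0x: "f0 \<in> x {a..b}" unfolding f0_def using sel[OF ab] .
    have f1x: "f1 \<in> x {pr a..a}" unfolding f1_def using sel[OF cpa] .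
    have f0s: "f0 \<in> sections P {a..b}" using f0x xsec[OF cell1[OF ab]] by auto
    have f1s: "f1 \<in> sections P {pr a..a}" using f1x xsec[OF cell1[OF cpa]] by auto
    have "{a} \<subseteq> {a..b}" using ab' by auto
    then have r0: "restrict f0 {a} \<in> x {a}"
      using xres[rule_format, OF cell0[OF aV] cell1[OF ab]] f0x by blast
    have "{a} \<subseteq> {pr a..a}" using cpa unfolding consec_def by auto
    then have r1: "restrict f1 {a} \<in> x {a}"
      using xres[rule_format, OF cell0[OF aV] cell1[OF cpa]] f1x by blast
    have "path_component_of (Gamma P {a}) (restrict f0 {a}) (restrict f1 {a})"
      using pc_mem2[OF xpc[rule_format, OF cell0[OF aV]] r0 r1] .
    then obtain g where g: "pathin (Gamma P {a}) g" "g 0 = restrict f0 {a}" "g 1 = restrict f1 {a}"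
      unfolding path_component_of_def by blast
    have "continuous_map (top_of_set {0..1}) euclidean ((\<lambda>h. h a) \<circ> g)"
      using g(1) unfolding pathin_def by (rule continuous_map_compose) (rule eval_cont, simp)
    then have gc: "continuous_on {0..1} (\<lambda>u. g u a)" by (simp add: o_def)
    define \<gamma> where "\<gamma> u = fst (g u a)" for u
    have \<gamma>c: "continuous_on {0..1} \<gamma>" unfolding \<gamma>_def by (intro continuous_intros gc)
    have \<gamma>P: "\<forall>u\<in>{0..1}. (\<gamma> u, a) \<in> P"
    proof
      fix u :: real assume u: "u \<in> {0..1}"
      have "g u \<in> topspace (Gamma P {a})"
        using continuous_map_image_subset_topspace[OF g(1)[unfolded pathin_def]] u by auto
      then have "g u \<in> sections P {a}" by (simp add: topspace_Gamma)
      then have "g u a \<in> P" "snd (g u a) = a" unfolding sections_def by auto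
      then show "(\<gamma> u, a) \<in> P" unfolding \<gamma>_def by (metis prod.collapse)
    qed
    have \<gamma>0: "\<gamma> 0 = fst (f0 a)" unfolding \<gamma>_def using g(2) by simp
    obtain f' where f': "path_component_of (Gamma P {a..b}) f0 f'" "f' a = (\<gamma> 1, a)" "f' b = f0 b"
      using cell_mod[OF P ab' f0s \<gamma>c \<gamma>0 \<gamma>P] by blast
    have "f' \<in> x {a..b}" using pc_mem[OF xpc[rule_format, OF cell1[OF ab]] f0x f'(1)] .
    moreover have "f' a = q a"
    proof -
      have "a \<in> {pr a..a}" using cpa unfolding consec_def by auto
      then have "snd (f1 a) = a" using f1s unfolding sections_def by auto
      then have "f1 a = (\<gamma> 1, a)" unfolding \<gamma>_def using g(3) by (simp add: prod_eq_iff)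
      then show ?thesis using f'(2) unfolding q_def f1_def by simp
    qed
    moreover have "f' b = sel a b b" using f'(3) unfolding f0_def .
    ultimately show ?thesis by blast
  qed
  have M: "M a b \<in> x {a..b} \<and> M a b a = q a \<and> M a b b = sel a b b" if "consec a b" for a b
    unfolding M_def using Mex[OF that] by (rule someI_ex)
  have Msec: "M a b \<in> sections P {a..b}" if "consec a b" for a b
    using M[OF that] xsec[OF cell1[OF that]] by auto
  define s where "s t = M (lo t) (hi t) t" for t
  have S1: "s t = M a b t" if ab: "consec a b" and t: "t \<in> {a..b}" for a b t
  proof (cases "t < b")
    case True then show ?thesis using F3[OF ab] t unfolding s_def by auto
  next
    case False
    then have tb: "t = b" using t by auto
    have bV: "b \<in> V" using ab unfolding consec_def by auto
    have "s b = M b (hi b) b" unfolding s_def using lov[OF bV] by simp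
    also have "\<dots> = q b" using M[OF F1[of b, unfolded lov[OF bV]]] by simp
    also have "\<dots> = sel a b b" unfolding q_def using F4[OF ab] by simp
    also have "\<dots> = M a b b" using M[OF ab] by simp
    finally show ?thesis using tb by simp
  qed
  have S2: "restrict s {a..b} = M a b" if ab: "consec a b" for a b
  proof
    fix t show "restrict s {a..b} t = M a b t"
      using S1[OF ab] Msec[OF ab] unfolding sections_def extensional_def by auto
  qed
  have scont: "continuous_on {a..b} s" if ab: "consec a b" for a b
  proof -
    have "continuous_on {a..b} (M a b)" using Msec[OF ab] unfolding sections_def by auto
    then show ?thesis by (rule continuous_on_cong[THEN iffD1, rotated 2]) (use S1[OF ab] in auto)
  qed
  have sP: "s t \<in> P \<and> snd (s t) = t" for t
  proof -
    have "t \<in> {lo t..hi t}" using lo[of t] hi[of t] by auto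
    then show ?thesis using S1[OF F1[of t]] Msec[OF F1[of t]] unfolding sections_def by auto
  qed
  have "isCont s t" for t
  proof -
    define b where "b = lo t"
    define c where "c = hi t"
    define a where "a = pr b"
    have bc: "consec b c" unfolding b_def c_def by (rule F1)
    have ab: "consec a b" unfolding a_def using F2 bc unfolding consec_def by auto
    have "continuous_on ({a..b} \<union> {b..c}) s"
      by (rule continuous_on_closed_Un) (auto intro: scont ab bc)
    moreover have "{a..b} \<union> {b..c} = {a..c}" using ab bc unfolding consec_def by auto
    ultimately have "continuous_on {a..c} s" by simp
    moreover have "t \<in> interior {a..c}"
      using ab bc lo[of t] hi[of t] unfolding consec_def b_def c_def by auto
    ultimately show ?thesis by (rule continuous_on_interior)
  qed
  then have "continuous_on UNIV s" by (simp add: continuous_at_imp_continuous_on)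
  then have ssec: "s \<in> sections P UNIV" unfolding sections_def using sP by auto
  have "\<forall>c\<in>closed_cells V. restrict s c \<in> x c"
  proof
    fix c assume c: "c \<in> closed_cells V"
    then consider v where "v \<in> V" "c = {v}" | a b where "consec a b" "c = {a..b}"
      unfolding closed_cells_def consec_def by blast
    then show "restrict s c \<in> x c"
    proof cases
      case 1
      have cv: "consec v (hi v)" using F1[of v] lov[OF 1(1)] by simp
      have "v \<in> {v..hi v}" using cv unfolding consec_def by auto
      then have "{v} \<subseteq> {v..hi v}" by auto
      then have "restrict (M v (hi v)) {v} \<in> x {v}"
        using xres[rule_format, OF cell0[OF 1(1)] cell1[OF cv]] M[OF cv] by blast
      moreover have "restrict (M v (hi v)) {v} = restrict s {v}"
        using S1[OF cv] \<open>v \<in> {v..hi v}\<close> by (auto simp: restrict_def)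
      ultimately show ?thesis using 1 by simp
    next
      case 2
      then show ?thesis using S2[OF 2(1)] M[OF 2(1)] by simp
    qed
  qed
  then show ?thesis using ssec by blast
qed

end
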